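(* Let $\sigma$ be a boundedly erasing $k$-block substitution with $w_\epsilon\ne1^k$. Then: (i) $\sigma$ does not satisfy the optimality condition; (ii) there exists $n\in\mathbb N$ such that $f_\sigma^n(x)=0$ for every $x\in\mathbb I$ whose $f_\sigma$-orbit is disjoint from $\mathcal Q_2$.
   Context: Notation: $\mathbb I=[0,1]$. $\mathcal Q_2$ is the set of dyadic rationals in the open interval $(0,1)$. $\{0,1\}^*$ and $\{0,1\}^\omega$ denote finite and infinite binary words, and $\epsilon$ is the empty word. For a word $w$, set $0.w=\sum_iw_i2^{-i}$. For $x\in(0,1]$, $\widetilde x$ is the unique infinite binary expansion of $x$ not ending in $0^\infty$. Fix $k\ge2$. An erasing $k$-block substitution is a map $\sigma:\{0,1\}^k\to\{0,1\}^*$ with exactly one block $w_\epsilon$ such that $\sigma(w_\epsilon)=\epsilon$. $\sigma$ is alternating if there are $\sigma_1,\dots,\sigma_k:\{0,1\}\to\{0,1\}^*$ with $\sigma(b_1\cdots b_k)=\sigma_1(b_1)\cdots\sigma_k(b_k)$. It is then extended to all finite or infinite words by $\sigma(u)=\prod_j\sigma_{((j-1)\bmod k)+1}(u_j)$. $\sigma$ is completely erasing if it is erasing and alternating, and every $w\in\{0,1\}^*$ satisfies $\sigma^n(w)=\epsilon$ for some $n\in\mathbb N$; the least such $n$ is $\epsilon(w)$. $\sigma$ is boundedly erasing if it is completely erasing and $\sup_{w\in\{0,1\}^*}\epsilon(w)<\infty$. The map $f_\sigma:\mathbb I\to\mathbb I$ is defined by $f_\sigma(x)=0.\sigma(\widetilde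 x)$ if $x\in(0,1]$ and $\widetilde x\neq w_\epsilon^\infty$, and $f_\sigma(x)=0$ otherwise. Optimality condition: every $w\in\{0,1\}^\omega$ can be written as $w=\prod_{i\ge1}\sigma(b_i)$ with blocks $b_i\in\{0,1\}^k$ satisfying $\sigma(b_i)\ne\epsilon$. *)

theory Defs
  imports Complex_Main
begin

text \<open>Binary letters are booleans: True = 1, False = 0. Finite words are bool lists,
infinite words are functions nat \<Rightarrow> bool (0-indexed: u 0 is the first letter).
An alternating k-block substitution is given by its components
s j :: bool \<Rightarrow> bool list for j = 0..k-1 (s j corresponds to sigma_(j+1)).\<close>

definition blk_sub :: "nat \<Rightarrow> (nat \<Rightarrow> bool \<Rightarrow> bool list) \<Rightarrow> bool list \<Rightarrow> bool list" where
  "blk_sub k s b = concat (map (\<lambda>j. s j (b ! j)) [0..<k])"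

definition sub_word :: "nat \<Rightarrow> (nat \<Rightarrow> bool \<Rightarrow> bool list) \<Rightarrow> bool list \<Rightarrow> bool list" where
  "sub_word k s u = concat (map (\<lambda>j. s (j mod k) (u ! j)) [0..<length u])"

text \<open>Infinite concatenation of finite words; if the result is finite it is padded with
zeros (which does not change the value 0.w).\<close>
definition inf_concat :: "(nat \<Rightarrow> bool list) \<Rightarrow> nat \<Rightarrow> bool" where
  "inf_concat ws n =
     (if \<exists>m. n < length (concat (map ws [0..<m]))
      then concat (map ws [0..<(LEAST m. n < length (concat (map ws [0..<m])))]) ! n
      else False)"

definition sub_inf :: "nat \<Rightarrow> (nat \<Rightarrow> bool \<Rightarrow> bool list) \<Rightarrow> (nat \<Rightarrow> bool) \<Rightarrow> nat \<Rightarrow> bool" where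
  "sub_inf k s u = inf_concat (\<lambda>j. s (j mod k) (u j))"

definition erasing :: "nat \<Rightarrow> (nat \<Rightarrow> bool \<Rightarrow> bool list) \<Rightarrow> bool" where
  "erasing k s \<longleftrightarrow> (\<exists>!b. length b = k \<and> blk_sub k s b = [])"

definition w_eps :: "nat \<Rightarrow> (nat \<Rightarrow> bool \<Rightarrow> bool list) \<Rightarrow> bool list" where
  "w_eps k s = (THE b. length b = k \<and> blk_sub k s b = [])"

definition completely_erasing :: "nat \<Rightarrow> (nat \<Rightarrow> bool \<Rightarrow> bool list) \<Rightarrow> bool" where
  "completely_erasing k s \<longleftrightarrow> erasing k s \<and> (\<forall>w. \<exists>n. (sub_word k s ^^ n) w = [])"

definition eps_time :: "nat \<Rightarrow> (nat \<Rightarrow> bool \<Rightarrow> bool list) \<Rightarrow> bool list \<Rightarrow> nat" where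
  "eps_time k s w = (LEAST n. (sub_word k s ^^ n) w = [])"

definition boundedly_erasing :: "nat \<Rightarrow> (nat \<Rightarrow> bool \<Rightarrow> bool list) \<Rightarrow> bool" where
  "boundedly_erasing k s \<longleftrightarrow> completely_erasing k s \<and> (\<exists>B. \<forall>w. eps_time k s w \<le> B)"

definition bval :: "(nat \<Rightarrow> bool) \<Rightarrow> real" where
  "bval u = (\<Sum>i. (if u i then 1 else 0) / 2 ^ (i + 1))"

definition bin_exp :: "real \<Rightarrow> nat \<Rightarrow> bool" where
  "bin_exp x = (THE u. (\<forall>n. \<exists>m\<ge>n. u m) \<and> bval u = x)"

definition f_sigma :: "nat \<Rightarrow> (nat \<Rightarrow> bool \<Rightarrow> bool list) \<Rightarrow> real \<Rightarrow> real" where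
  "f_sigma k s x =
     (if 0 < x \<and> x \<le> 1 \<and> bin_exp x \<noteq> (\<lambda>n. w_eps k s ! (n mod k))
      then bval (sub_inf k s (bin_exp x)) else 0)"

definition optimal :: "nat \<Rightarrow> (nat \<Rightarrow> bool \<Rightarrow> bool list) \<Rightarrow> bool" where
  "optimal k s \<longleftrightarrow> (\<forall>w :: nat \<Rightarrow> bool. \<exists>b :: nat \<Rightarrow> bool list.
      (\<forall>i. length (b i) = k \<and> blk_sub k s (b i) \<noteq> []) \<and>
      w = inf_concat (\<lambda>i. blk_sub k s (b i)))"

definition Q2 :: "real set" where
  "Q2 = {x. 0 < x \<and> x < 1 \<and> (\<exists>(a::int) (n::nat). x = a / 2 ^ n)}"

end

theory Submission
  imports Defs
begin

lemma C_split: "m \<le> m' \<Longrightarrow> concat (map ws [0..<m']) = concat (map ws [0..<m]) @ concat (map ws [m..<m'])"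
proof -
  assume "m \<le> m'"
  then obtain d where "m' = m + d" by (metis le_add_diff_inverse)
  then show ?thesis using upt_add_eq_append[of 0 m d] by simp
qed

lemma len_mono: "m \<le> m' \<Longrightarrow> length (concat (map ws [0..<m])) \<le> length (concat (map ws [0..<m']))"
  by (drule C_split[of _ _ ws]) simp

lemma inf_concat_C:
  assumes "i < length (concat (map ws [0..<m]))"
  shows "inf_concat ws i = concat (map ws [0..<m]) ! i"
proof -
  let ?P = "\<lambda>m. i < length (concat (map ws [0..<m]))"
  have ex: "\<exists>m. ?P m" using assms by blast
  define L where "L = (LEAST m. ?P m)"
  have PL: "?P L" unfolding L_def by (rule LeastI[of ?P m]) (fact assms)
  have "L \<le> m" unfolding L_def by (rule Least_le) (fact assms)
  then have "concat (map ws [0..<m]) = concat (map ws [0..<L]) @ concat (map ws [L..<m])" by (rule C_split)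
  then have e: "concat (map ws [0..<m]) ! i = concat (map ws [0..<L]) ! i" using PL by (simp add: nth_append)
  have "inf_concat ws i = concat (map ws [0..<L]) ! i" unfolding inf_concat_def L_def using ex by simp
  then show ?thesis using e by simp
qed

lemma sub_word_pref: "sub_word k s (map v [0..<m]) = concat (map (\<lambda>j. s (j mod k) (v j)) [0..<m])"
  unfolding sub_word_def by (intro arg_cong[where f=concat] map_cong) auto

lemma pref_sub_inf:
  "sub_word k s (map v [0..<m]) = map (sub_inf k s v) [0..<length (sub_word k s (map v [0..<m]))]"
  by (rule nth_equalityI) (auto simp: sub_inf_def sub_word_pref inf_concat_C)

definition inf_ones :: "(nat \<Rightarrow> bool) \<Rightarrow> bool" where
  "inf_ones u \<longleftrightarrow> (\<forall>n. \<exists>m\<ge>n. u m)"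

lemma grow:
  assumes "inf_ones (inf_concat ws)"
  shows "\<exists>m. L \<le> length (concat (map ws [0..<m]))"
proof (rule ccontr)
  assume "\<not> ?thesis"
  then have h: "\<forall>m. length (concat (map ws [0..<m])) < L" by (auto simp: not_le)
  have "\<forall>i\<ge>L. \<not> inf_concat ws i" unfolding inf_concat_def using h
    by (auto dest: order.strict_trans)
  with assms show False unfolding inf_ones_def by blast
qed

lemma chain:
  assumes er: "\<forall>p. (sub_word k s ^^ B) p = []"
    and io: "\<forall>j<B. inf_ones (sub_inf k s ((sub_inf k s ^^ j) u0))"
  shows False
proof -
  have key: "j \<le> B \<Longrightarrow> \<exists>n. (sub_word k s ^^ j) (map u0 [0..<n])
      = map ((sub_inf k s ^^ j) u0) [0..<length ((sub_word k s ^^ j) (map u0 [0..<n]))]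
      \<and> L \<le> length ((sub_word k s ^^ j) (map u0 [0..<n]))" for j L
  proof (induction j arbitrary: L)
    case 0 show ?case by (intro exI[of _ L]) simp
  next
    case (Suc j)
    let ?v = "(sub_inf k s ^^ j) u0"
    have "inf_ones (sub_inf k s ?v)" using io Suc.prems by simp
    then obtain m where m: "L \<le> length (concat (map (\<lambda>i. s (i mod k) (?v i)) [0..<m]))"
      using grow unfolding sub_inf_def by blast
    obtain n where n: "(sub_word k s ^^ j) (map u0 [0..<n]) = map ?v [0..<length ((sub_word k s ^^ j) (map u0 [0..<n]))]"
      and mn: "m \<le> length ((sub_word k s ^^ j) (map u0 [0..<n]))" using Suc.IH[of m] Suc.prems by (meson Suc_leD)
    define q where "q = (sub_word k s ^^ j) (map u0 [0..<n])"
    have qeq: "q = map ?v [0..<length q]" unfolding q_def by (rule n)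
    have "(sub_word k s ^^ Suc j) (map u0 [0..<n]) = sub_word k s q"
      unfolding q_def by simp
    also have "\<dots> = sub_word k s (map ?v [0..<length q])" by (rule arg_cong[OF qeq])
    also have "\<dots> = map (sub_inf k s ?v) [0..<length (sub_word k s (map ?v [0..<length q]))]"
      by (rule pref_sub_inf)
    finally have e: "(sub_word k s ^^ Suc j) (map u0 [0..<n]) = map (sub_inf k s ?v) [0..<length (sub_word k s (map ?v [0..<length q]))]" .
    have "L \<le> length (sub_word k s (map ?v [0..<length q]))"
      using m len_mono[OF mn[folded q_def], of "\<lambda>i. s (i mod k) (?v i)"] by (simp add: sub_word_pref)
    then show ?case using e by (intro exI[of _ n]) simp
  qed
  from key[of B 1] obtain n where "1 \<le> length ((sub_word k s ^^ B) (map u0 [0..<n]))" by blast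
  with er show False by simp
qed


lemma sub_word_append:
  "sub_word k s (y @ z) = sub_word k s y @ concat (map (\<lambda>j. s ((length y + j) mod k) (z ! j)) [0..<length z])"
proof -
  have u: "[0..<length (y @ z)] = [0..<length y] @ map (\<lambda>i. i + length y) [0..<length z]"
    using upt_add_eq_append[of 0 "length y" "length z"] map_add_upt[of "length y" "length z"] by (simp add: add.commute)
  show ?thesis unfolding sub_word_def u map_append concat_append map_map
    by (rule arg_cong2[where f="(@)"]; rule arg_cong[where f=concat]; rule map_cong)
       (auto simp: nth_append add.commute)
qed

lemma sub_word_nil[simp]: "sub_word k s [] = []"
  by (simp add: sub_word_def)

lemma iter_prefix: "\<exists>r. (sub_word k s ^^ n) (y @ r0) = (sub_word k s ^^ n) y @ r"
proof (induction n arbitrary: y r0)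
  case 0 then show ?case by auto
next
  case (Suc n)
  have "(sub_word k s ^^ Suc n) (y @ r0) = (sub_word k s ^^ n) (sub_word k s (y @ r0))"
    by (simp add: funpow_Suc_right del: funpow.simps)
  also have "sub_word k s (y @ r0) = sub_word k s y @ concat (map (\<lambda>j. s ((length y + j) mod k) (r0 ! j)) [0..<length r0])"
    by (rule sub_word_append)
  finally obtain r where "(sub_word k s ^^ Suc n) (y @ r0) = (sub_word k s ^^ n) (sub_word k s y) @ r"
    using Suc.IH by metis
  then show ?case by (simp add: funpow_Suc_right del: funpow.simps)
qed

lemma len_blocks: "(\<forall>i<m. length (b i) = k) \<Longrightarrow> length (concat (map b [0..<m])) = m * k"
  by (induction m) auto

lemma sub_word_blocks:
  "(\<forall>i<m. length (b i) = k) \<Longrightarrow> sub_word k s (concat (map b [0..<m])) = concat (map (\<lambda>i. blk_sub k s (b i)) [0..<m])"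
proof (induction m)
  case 0 then show ?case by simp
next
  case (Suc m)
  have l: "length (concat (map b [0..<m])) = m * k" using Suc.prems by (intro len_blocks) auto
  have bm: "length (b m) = k" using Suc.prems by auto
  have "sub_word k s (concat (map b [0..<Suc m])) = sub_word k s (concat (map b [0..<m]) @ b m)" by simp
  also have "\<dots> = sub_word k s (concat (map b [0..<m])) @ blk_sub k s (b m)"
    unfolding sub_word_append l bm blk_sub_def
    by (auto intro!: arg_cong[where f=concat] map_cong)
  finally show ?case using Suc by simp
qed

lemma opt_pre:
  assumes "optimal k s"
  shows "\<exists>x r. sub_word k s x = v @ r"
proof -
  define w where "w = (\<lambda>n. if n < length v then v ! n else False)"
  obtain b where hb: "\<forall>i. length (b i) = k \<and> blk_sub k s (b i) \<noteq> []"
    and hw: "w = inf_concat (\<lambda>i. blk_sub k s (b i))"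
    using assms unfolding optimal_def by blast
  define ws where "ws = (\<lambda>i. blk_sub k s (b i))"
  have lg: "m \<le> length (concat (map ws [0..<m]))" for m
  proof (induction m)
    case (Suc m)
    have "ws m \<noteq> []" using hb ws_def by auto
    then have "1 \<le> length (ws m)" by (cases "ws m") auto
    then show ?case using Suc by simp
  qed simp
  define M where "M = length v"
  define C where "C = concat (map ws [0..<M])"
  have "take M C = v"
  proof (rule nth_equalityI)
    show "length (take M C) = length v" using lg[of M] C_def M_def by simp
    fix i assume "i < length (take M C)"
    then have i: "i < M" "i < length C" by auto
    have "v ! i = w i" using i M_def w_def by simp
    also have "\<dots> = inf_concat ws i" using hw ws_def by simp
    also have "\<dots> = C ! i" unfolding C_def by (rule inf_concat_C) (use i C_def in simp)
    finally show "take M C ! i = v ! i" using i by simp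
  qed
  then have "C = v @ drop M C" by (metis append_take_drop_id)
  moreover have "sub_word k s (concat (map b [0..<M])) = C"
    unfolding C_def ws_def using hb by (intro sub_word_blocks) auto
  ultimately show ?thesis by metis
qed

lemma opt_deep:
  assumes "optimal k s"
  shows "\<exists>x r. (sub_word k s ^^ n) x = v @ r"
proof (induction n arbitrary: v)
  case 0 then show ?case by auto
next
  case (Suc n)
  obtain x r where xr: "(sub_word k s ^^ n) x = v @ r" using Suc.IH by blast
  obtain y r' where yr: "sub_word k s y = x @ r'" using opt_pre[OF assms] by blast
  obtain r'' where "(sub_word k s ^^ n) (x @ r') = (sub_word k s ^^ n) x @ r''" using iter_prefix by blast
  then have "(sub_word k s ^^ Suc n) y = v @ (r @ r'')"
    using xr yr by (simp add: funpow_Suc_right del: funpow.simps)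
  then show ?case by blast
qed

lemma iter_nil: "(sub_word k s ^^ n) [] = []"
  by (induction n) auto

lemma bounded_B:
  assumes "boundedly_erasing k s"
  shows "\<exists>B. \<forall>p. (sub_word k s ^^ B) p = []"
proof -
  obtain B where B: "\<forall>w. eps_time k s w \<le> B" and ce: "completely_erasing k s"
    using assms unfolding boundedly_erasing_def by blast
  have "(sub_word k s ^^ B) p = []" for p
  proof -
    obtain n where "(sub_word k s ^^ n) p = []" using ce unfolding completely_erasing_def by blast
    then have e: "(sub_word k s ^^ eps_time k s p) p = []" unfolding eps_time_def by (rule LeastI)
    have "B = (B - eps_time k s p) + eps_time k s p" using B by simp
    then have "(sub_word k s ^^ B) p = (sub_word k s ^^ (B - eps_time k s p)) ((sub_word k s ^^ eps_time k s p) p)"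
      by (metis funpow_add o_apply)
    then show ?thesis using e iter_nil by simp
  qed
  then show ?thesis by blast
qed

lemma not_optimal:
  assumes "boundedly_erasing k s"
  shows "\<not> optimal k s"
proof
  assume o: "optimal k s"
  obtain B where B: "\<forall>p. (sub_word k s ^^ B) p = []" using bounded_B[OF assms] by blast
  obtain x r where "(sub_word k s ^^ B) x = [True] @ r" using opt_deep[OF o] by blast
  with B show False by simp
qed


definition tt :: "(nat \<Rightarrow> bool) \<Rightarrow> nat \<Rightarrow> real" where
  "tt u i = (if u i then 1 else 0) / 2 ^ (i + 1)"

lemma tt_nonneg: "0 \<le> tt u i" by (simp add: tt_def)

lemma tt_le: "tt u i \<le> (1/2) ^ i"
  by (simp add: tt_def power_one_over divide_simps)

lemma tt_summable: "summable (tt u)"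
  by (rule summable_comparison_test'[where g="\<lambda>i. (1/2::real)^i" and N=0])
     (auto simp: tt_nonneg tt_le summable_geometric)

lemma bval_tt: "bval u = suminf (tt u)"
  unfolding bval_def tt_def[abs_def] by (rule refl)

lemma tail_le: "(\<Sum>n. tt v (n + Suc i)) \<le> 1 / 2 ^ (i + 1)"
proof -
  have g: "(\<lambda>n. (1/2::real)^(i+2) * (1/2)^n) sums ((1/2)^(i+2) * (1 / (1 - 1/2)))"
    by (intro sums_mult geometric_sums) simp
  have "(\<Sum>n. tt v (n + Suc i)) \<le> (\<Sum>n. (1/2::real)^(i+2) * (1/2)^n)"
  proof (rule suminf_le)
    fix n show "tt v (n + Suc i) \<le> (1/2)^(i+2) * (1/2)^n"
      by (simp add: tt_def power_one_over power_add[symmetric] divide_simps)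
    show "summable (\<lambda>n. tt v (n + Suc i))" using tt_summable summable_ignore_initial_segment by blast
    show "summable (\<lambda>n. (1/2::real)^(i+2) * (1/2)^n)" using g by (rule sums_summable)
  qed
  also have "\<dots> = (1/2)^(i+2) * (1 / (1 - 1/2))" using g by (rule sums_unique[symmetric])
  also have "\<dots> = 1 / 2 ^ (i + 1)" by (simp add: power_one_over)
  finally show ?thesis .
qed

lemma bval_less:
  assumes io: "inf_ones u" and eq: "\<forall>j<i. u j = v j" and ui: "u i" and vi: "\<not> v i"
  shows "bval v < bval u"
proof -
  have su: "bval u = (\<Sum>n. tt u (n + Suc i)) + (\<Sum>j<Suc i. tt u j)"
    unfolding bval_tt by (rule suminf_split_initial_segment[OF tt_summable])
  have sv: "bval v = (\<Sum>n. tt v (n + Suc i)) + (\<Sum>j<Suc i. tt v j)"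
    unfolding bval_tt by (rule suminf_split_initial_segment[OF tt_summable])
  have pre: "(\<Sum>j<i. tt u j) = (\<Sum>j<i. tt v j)" using eq by (intro sum.cong) (auto simp: tt_def)
  obtain m where m: "m \<ge> Suc i" "u m" using io unfolding inf_ones_def by blast
  have pos: "0 < (\<Sum>n. tt u (n + Suc i))"
  proof (rule suminf_pos2[where i="m - Suc i"])
    show "summable (\<lambda>n. tt u (n + Suc i))" using tt_summable summable_ignore_initial_segment by blast
    show "\<And>n. 0 \<le> tt u (n + Suc i)" by (rule tt_nonneg)
    show "0 < tt u (m - Suc i + Suc i)" using m by (simp add: tt_def)
  qed
  have "bval v \<le> 1 / 2 ^ (i+1) + (\<Sum>j<i. tt v j)"
    using sv tail_le[of v i] vi by (simp add: tt_def)
  also have "\<dots> < bval u" using su pos pre ui by (simp add: tt_def)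
  finally show ?thesis .
qed

lemma bval_inj:
  assumes "inf_ones u" "inf_ones v" "bval u = bval v"
  shows "u = v"
proof (rule ccontr)
  assume "u \<noteq> v"
  then have ex: "\<exists>i. u i \<noteq> v i" by auto
  define i where "i = (LEAST i. u i \<noteq> v i)"
  have d: "u i \<noteq> v i" unfolding i_def using ex by (rule LeastI_ex)
  have eq: "\<forall>j<i. u j = v j" unfolding i_def using not_less_Least by blast
  show False
  proof (cases "u i")
    case True
    then have "bval v < bval u" using bval_less[OF assms(1) eq] d by simp
    then show False using assms by simp
  next
    case False
    then have "bval u < bval v" using bval_less[OF assms(2), of i u] eq d by auto
    then show False using assms by simp
  qed
qed

lemma bin_exp_bval: "inf_ones v \<Longrightarrow> bin_exp (bval v) = v"
  unfolding bin_exp_def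
  by (rule the_equality) (auto simp: inf_ones_def[symmetric] intro: bval_inj[symmetric])

lemma geo_fin: "(\<Sum>i<N. 1 / (2::real) ^ (i + 1)) = 1 - 1 / 2 ^ N"
  by (induction N) (simp_all add: field_simps)

lemma fin_dyadic:
  assumes "\<not> inf_ones v"
  shows "bval v = 0 \<or> bval v \<in> Q2"
proof -
  obtain N where N: "\<forall>m\<ge>N. \<not> v m" using assms unfolding inf_ones_def by auto
  have b: "bval v = (\<Sum>i<N. tt v i)" unfolding bval_tt
    by (rule suminf_finite) (use N in \<open>auto simp: tt_def\<close>)
  have ge: "0 \<le> bval v" unfolding b by (intro sum_nonneg tt_nonneg)
  have "bval v \<le> (\<Sum>i<N. 1 / (2::real) ^ (i + 1))" unfolding b
    by (intro sum_mono) (simp add: tt_def)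
  also have "\<dots> < 1" by (simp only: geo_fin) simp
  finally have lt: "bval v < 1" .
  define a where "a = (\<Sum>i<N. if v i then (2::int) ^ (N - (i+1)) else 0)"
  have "real_of_int a / 2 ^ N = (\<Sum>i<N. (if v i then 2 ^ (N - (i+1)) else 0) / (2::real) ^ N)"
    unfolding a_def by (simp add: sum_divide_distrib if_distrib cong: if_cong)
  also have "\<dots> = (\<Sum>i<N. tt v i)"
  proof (rule sum.cong)
    fix i assume "i \<in> {..<N}"
    then have e: "N - (i+1) + (i+1) = N" by simp
    have "(2::real) ^ N = 2 ^ (N - (i+1)) * 2 ^ (i+1)"
      by (metis e power_add)
    then show "(if v i then 2 ^ (N - (i+1)) else 0) / (2::real) ^ N = tt v i"
      by (simp add: tt_def)
  qed simp
  finally have "bval v = real_of_int a / 2 ^ N" using b by simp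
  then have "bval v = 0 \<or> (0 < bval v \<and> bval v < 1 \<and> (\<exists>(a::int) (n::nat). bval v = a / 2 ^ n))"
    using ge lt by (metis less_eq_real_def)
  then show ?thesis unfolding Q2_def by blast
qed

lemma f0: "f_sigma k s 0 = 0" by (simp add: f_sigma_def)

lemma f_nz: "f_sigma k s x \<noteq> 0 \<Longrightarrow> f_sigma k s x = bval (sub_inf k s (bin_exp x))"
  unfolding f_sigma_def by (auto split: if_splits)

lemma orbit:
  assumes B: "\<forall>p. (sub_word k s ^^ B) p = []"
    and nq: "\<forall>m. (f_sigma k s ^^ m) x \<notin> Q2"
  shows "(f_sigma k s ^^ B) x = 0"
proof (rule ccontr)
  let ?X = "\<lambda>m. (f_sigma k s ^^ m) x"
  assume nz: "?X B \<noteq> 0"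
  have zero_stay: "?X m = 0 \<Longrightarrow> ?X (m + d) = 0" for m d
    by (induction d) (auto simp: f0)
  have nzm: "?X m \<noteq> 0" if "m \<le> B" for m
    using zero_stay[of m "B - m"] that nz by auto
  have step: "inf_ones (sub_inf k s (bin_exp (?X m))) \<and> bin_exp (?X (Suc m)) = sub_inf k s (bin_exp (?X m))"
    if "m < B" for m
  proof -
    have "?X (Suc m) \<noteq> 0" using nzm[of "Suc m"] that by simp
    then have e: "?X (Suc m) = bval (sub_inf k s (bin_exp (?X m)))" using f_nz by simp
    have io: "inf_ones (sub_inf k s (bin_exp (?X m)))"
    proof (rule ccontr)
      assume "\<not> ?thesis"
      then have "?X (Suc m) = 0 \<or> ?X (Suc m) \<in> Q2" using fin_dyadic e by metis
      then show False using nq \<open>?X (Suc m) \<noteq> 0\<close> by blast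
    qed
    then show ?thesis using e bin_exp_bval by simp
  qed
  have it: "m \<le> B \<Longrightarrow> bin_exp (?X m) = (sub_inf k s ^^ m) (bin_exp x)" for m
  proof (induction m)
    case 0 then show ?case by simp
  next
    case (Suc m) then show ?case using step[of m] by simp
  qed
  have "\<forall>j<B. inf_ones (sub_inf k s ((sub_inf k s ^^ j) (bin_exp x)))"
    using step it by (metis less_imp_le)
  then show False using chain[OF B] by blast
qed

theorem lemma4p1:
  fixes k :: nat and s :: "nat \<Rightarrow> bool \<Rightarrow> bool list"
  assumes "k \<ge> 2"
    and "boundedly_erasing k s"
    and "w_eps k s \<noteq> replicate k True"
  shows "\<not> optimal k s \<and>
    (\<exists>n. \<forall>x \<in> {0..1}. (\<forall>m. (f_sigma k s ^^ m) x \<notin> Q2) \<longrightarrow> (f_sigma k s ^^ n) x = 0)"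
proof
  show "\<not> optimal k s" using not_optimal[OF assms(2)] .
  obtain B where B: "\<forall>p. (sub_word k s ^^ B) p = []" using bounded_B[OF assms(2)] by blast
  show "\<exists>n. \<forall>x \<in> {0..1}. (\<forall>m. (f_sigma k s ^^ m) x \<notin> Q2) \<longrightarrow> (f_sigma k s ^^ n) x = 0"
    using orbit[OF B] by blast
qed

end
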